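(* Consider a PIR scheme for a graph $G=(\mathcal{S},\mathcal{W})$. Let $S\in\mathcal{S}$ be a server of degree $\delta$ and let $S_1,\dots,S_\delta$ be any enumeration of its neighbors. Then \[ H(A_S)\ \ge\ \sum_{i=1}^{\delta}\max\Big\{0,\ L-\sum_{j=i}^{\delta}H(A_{S_j})\Big\}, \] where $A_T$ denotes the answer of server $T$.
   Context: Graph-based PIR model (non-colluding servers, 2-replication). A simple graph $G=(\mathcal{S},\mathcal{W})$ has vertex set $\mathcal{S}$ of $N$ servers and edge set $\mathcal{W}=\{W_1,\dots,W_K\}$ of files; each file is identified with the edge of the two servers storing it, $W_{T}$ denotes the set of files stored on server $T$. Files are independent, each uniform on $\mathbb{F}_2^L$. A user wants $W_\theta$, $\theta$ uniform on $[K]$ and independent of the files; it generates one query per server, $\mathcal{Q}$ denoting the set of all queries, with $\mathcal{Q}$ independent of the files. Each server $T$ returns an answer $A_T$ that is a deterministic function of its query and $W_T$. Reliability: $W_\theta$ is determined by all answers and queries. Privacy: for each server $T$, $H(\theta\mid Q_T,W_T)=\log K$. *)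

theory Defs
  imports "HOL-Probability.Probability"
begin

definition ent :: "'w pmf \<Rightarrow> ('w \<Rightarrow> 'x) \<Rightarrow> real" where
  "ent mu X = (\<Sum>x\<in>set_pmf (map_pmf X mu).
       - (pmf (map_pmf X mu) x * log 2 (pmf (map_pmf X mu) x)))"

definition cond_ent :: "'w pmf \<Rightarrow> ('w \<Rightarrow> 'x) \<Rightarrow> ('w \<Rightarrow> 'y) \<Rightarrow> real" where
  "cond_ent mu X Y = ent mu (\<lambda>w. (X w, Y w)) - ent mu Y"

text \<open>Simple graph: finite vertex set, edges are 2-element subsets of vertices.
  Files are identified with edges.\<close>
definition simple_graph :: "'s set \<Rightarrow> 's set set \<Rightarrow> bool" where
  "simple_graph V E \<longleftrightarrow> finite V \<and> (\<forall>e\<in>E. e \<subseteq> V \<and> card e = 2)"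

definition nbrs :: "'s set set \<Rightarrow> 's \<Rightarrow> 's set" where
  "nbrs E T = {U. {T, U} \<in> E}"

definition file_dist :: "'s set set \<Rightarrow> nat \<Rightarrow> ('s set \<Rightarrow> bool list) pmf" where
  "file_dist E L = Pi_pmf E [] (\<lambda>_. pmf_of_set {xs :: bool list. length xs = L})"

definition stored_files :: "'s set set \<Rightarrow> 's \<Rightarrow> ('s set \<Rightarrow> bool list) \<Rightarrow> ('s set \<Rightarrow> bool list)" where
  "stored_files E T w = (\<lambda>e. if e \<in> E \<and> T \<in> e then w e else [])"

text \<open>Sample space: ((theta, queries), files). The joint law P of (theta, Q) is arbitrary
  (it may encode the user's private randomness); files are independent of (theta, Q).\<close>
definition pir_space :: "('s set \<times> ('s \<Rightarrow> 'q)) pmf \<Rightarrow> 's set set \<Rightarrow> nat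
    \<Rightarrow> (('s set \<times> ('s \<Rightarrow> 'q)) \<times> ('s set \<Rightarrow> bool list)) pmf" where
  "pir_space P E L = pair_pmf P (file_dist E L)"

definition answer :: "'s set set \<Rightarrow> ('s \<Rightarrow> 'q \<Rightarrow> ('s set \<Rightarrow> bool list) \<Rightarrow> 'a) \<Rightarrow> 's
    \<Rightarrow> (('s set \<times> ('s \<Rightarrow> 'q)) \<times> ('s set \<Rightarrow> bool list)) \<Rightarrow> 'a" where
  "answer E ans T om = ans T (snd (fst om) T) (stored_files E T (snd om))"

definition pir_scheme :: "'s set \<Rightarrow> 's set set \<Rightarrow> nat \<Rightarrow> ('s set \<times> ('s \<Rightarrow> 'q)) pmf
    \<Rightarrow> ('s \<Rightarrow> 'q \<Rightarrow> ('s set \<Rightarrow> bool list) \<Rightarrow> 'a) \<Rightarrow> bool" where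
  "pir_scheme V E L P ans \<longleftrightarrow>
     simple_graph V E \<and> E \<noteq> {} \<and> finite (set_pmf P) \<and>
     map_pmf fst P = pmf_of_set E \<and>
     \<comment> \<open>reliability: W_theta determined by all queries and answers\<close>
     cond_ent (pir_space P E L) (\<lambda>om. snd om (fst (fst om)))
       (\<lambda>om. (\<lambda>T. if T \<in> V then Some (snd (fst om) T) else None,
              \<lambda>T. if T \<in> V then Some (answer E ans T om) else None)) = 0 \<and>
     \<comment> \<open>privacy: H(theta | Q_T, W_T) = log K for every server T\<close>
     (\<forall>T\<in>V. cond_ent (pir_space P E L) (\<lambda>om. fst (fst om))
        (\<lambda>om. (snd (fst om) T, stored_files E T (snd om))) = log 2 (real (card E)))"

end

theory Submission
  imports Defs
begin

lemma pmf_map_meas: "pmf (map_pmf X mu) x = measure mu {w. X w = x}"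
  by (simp add: pmf_map vimage_def)

lemma pmf_map_sum:
  assumes "finite (set_pmf mu)"
  shows "pmf (map_pmf X mu) x = (\<Sum>w\<in>{w\<in>set_pmf mu. X w = x}. pmf mu w)"
proof -
  have "pmf (map_pmf X mu) x = measure mu ({w. X w = x} \<inter> set_pmf mu)"
    by (simp add: pmf_map_meas measure_Int_set_pmf)
  also have "\<dots> = (\<Sum>w\<in>{w\<in>set_pmf mu. X w = x}. pmf mu w)"
    using assms by (subst measure_measure_pmf_finite) (auto intro!: sum.cong)
  finally show ?thesis .
qed

lemma sum_group_map:
  assumes fin: "finite (set_pmf mu)"
  shows "(\<Sum>w\<in>set_pmf mu. pmf mu w * h (X w)) = (\<Sum>x\<in>X ` set_pmf mu. pmf (map_pmf X mu) x * h x)"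
proof -
  have "(\<Sum>w\<in>set_pmf mu. pmf mu w * h (X w)) = (\<Sum>x\<in>X ` set_pmf mu. \<Sum>w\<in>{w\<in>set_pmf mu. X w = x}. pmf mu w * h (X w))"
    using fin by (rule sum.image_gen)
  also have "\<dots> = (\<Sum>x\<in>X ` set_pmf mu. \<Sum>w\<in>{w\<in>set_pmf mu. X w = x}. pmf mu w * h x)"
    by (rule sum.cong[OF refl], rule sum.cong[OF refl]) simp
  also have "\<dots> = (\<Sum>x\<in>X ` set_pmf mu. pmf (map_pmf X mu) x * h x)"
    by (intro sum.cong refl) (simp add: pmf_map_sum[OF fin] sum_distrib_right)
  finally show ?thesis .
qed

lemma ent_repr:
  assumes fin: "finite (set_pmf mu)"
  shows "ent mu X = - (\<Sum>w\<in>set_pmf mu. pmf mu w * log 2 (pmf (map_pmf X mu) (X w)))"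
proof -
  have "ent mu X = - (\<Sum>x\<in>X ` set_pmf mu. pmf (map_pmf X mu) x * log 2 (pmf (map_pmf X mu) x))"
    unfolding ent_def set_map_pmf sum_negf ..
  also have "\<dots> = - (\<Sum>w\<in>set_pmf mu. pmf mu w * log 2 (pmf (map_pmf X mu) (X w)))"
    using sum_group_map[OF fin, of "\<lambda>x. log 2 (pmf (map_pmf X mu) x)" X] by simp
  finally show ?thesis .
qed

lemma ent_nonneg: "0 \<le> ent mu X"
  unfolding ent_def
proof (intro sum_nonneg)
  fix x assume x: "x \<in> set_pmf (map_pmf X mu)"
  then have p: "0 < pmf (map_pmf X mu) x" by (simp add: pmf_positive)
  have "pmf (map_pmf X mu) x \<le> 1" by (rule pmf_le_1)
  then have "log 2 (pmf (map_pmf X mu) x) \<le> 0" using p by (subst log_le_zero_cancel_iff) auto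
  then show "0 \<le> - (pmf (map_pmf X mu) x * log 2 (pmf (map_pmf X mu) x))"
    using p by (simp add: mult_nonneg_nonpos)
qed

lemma pmf_map_pos: "w \<in> set_pmf mu \<Longrightarrow> 0 < pmf (map_pmf X mu) (X w)"
  by (simp add: pmf_positive)

definition detm :: "'w pmf \<Rightarrow> ('w \<Rightarrow> 'x) \<Rightarrow> ('w \<Rightarrow> 'y) \<Rightarrow> bool" where
  "detm mu X Y \<longleftrightarrow> (\<forall>w\<in>set_pmf mu. \<forall>w'\<in>set_pmf mu. Y w = Y w' \<longrightarrow> X w = X w')"

lemma detmI: "(\<And>w w'. w \<in> set_pmf mu \<Longrightarrow> w' \<in> set_pmf mu \<Longrightarrow> Y w = Y w' \<Longrightarrow> X w = X w') \<Longrightarrow> detm mu X Y"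
  unfolding detm_def by blast

lemma detmD: "detm mu X Y \<Longrightarrow> w \<in> set_pmf mu \<Longrightarrow> w' \<in> set_pmf mu \<Longrightarrow> Y w = Y w' \<Longrightarrow> X w = X w'"
  unfolding detm_def by blast

lemma det_pmf_le:
  assumes "detm mu X Y" "w \<in> set_pmf mu"
  shows "pmf (map_pmf Y mu) (Y w) \<le> pmf (map_pmf X mu) (X w)"
proof -
  have "pmf (map_pmf Y mu) (Y w) = measure mu ({v. Y v = Y w} \<inter> set_pmf mu)"
    by (simp add: pmf_map_meas measure_Int_set_pmf)
  also have "\<dots> \<le> measure mu ({v. X v = X w} \<inter> set_pmf mu)"
  proof (rule measure_pmf.finite_measure_mono)
    show "{v. Y v = Y w} \<inter> set_pmf mu \<subseteq> {v. X v = X w} \<inter> set_pmf mu"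
      using assms unfolding detm_def by blast
  qed simp
  also have "\<dots> = pmf (map_pmf X mu) (X w)"
    by (simp add: pmf_map_meas measure_Int_set_pmf)
  finally show ?thesis .
qed

lemma det_ent_le:
  assumes fin: "finite (set_pmf mu)" and d: "detm mu X Y"
  shows "ent mu X \<le> ent mu Y"
  unfolding ent_repr[OF fin]
proof -
  have "(\<Sum>w\<in>set_pmf mu. pmf mu w * log 2 (pmf (map_pmf Y mu) (Y w)))
     \<le> (\<Sum>w\<in>set_pmf mu. pmf mu w * log 2 (pmf (map_pmf X mu) (X w)))"
  proof (intro sum_mono mult_left_mono)
    fix w assume w: "w \<in> set_pmf mu"
    show "log 2 (pmf (map_pmf Y mu) (Y w)) \<le> log 2 (pmf (map_pmf X mu) (X w))"
      using det_pmf_le[OF d w] pmf_map_pos[OF w, of Y] by (intro log_mono) auto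
  qed simp
  then show "- (\<Sum>w\<in>set_pmf mu. pmf mu w * log 2 (pmf (map_pmf X mu) (X w)))
    \<le> - (\<Sum>w\<in>set_pmf mu. pmf mu w * log 2 (pmf (map_pmf Y mu) (Y w)))" by simp
qed

lemma det_ent_eq:
  assumes "finite (set_pmf mu)" "detm mu X Y" "detm mu Y X"
  shows "ent mu X = ent mu Y"
  using det_ent_le[OF assms(1,2)] det_ent_le[OF assms(1,3)] by simp

lemma log2_le_lin: "0 < (t::real) \<Longrightarrow> log 2 t \<le> (t - 1) / ln 2"
proof -
  assume t: "0 < t"
  have "ln t \<le> t - 1" using t by (rule ln_le_minus_one)
  then show ?thesis unfolding log_def by (simp add: divide_right_mono)
qed

lemma gibbs:
  fixes p g :: "'w \<Rightarrow> real"
  assumes fin: "finite S" and p: "\<And>w. w \<in> S \<Longrightarrow> 0 \<le> p w" and g: "\<And>w. w \<in> S \<Longrightarrow> 0 < g w"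
    and s1: "(\<Sum>w\<in>S. p w * g w) \<le> 1" and s2: "(\<Sum>w\<in>S. p w) = 1"
  shows "(\<Sum>w\<in>S. p w * log 2 (g w)) \<le> 0"
proof -
  have "(\<Sum>w\<in>S. p w * log 2 (g w)) \<le> (\<Sum>w\<in>S. p w * ((g w - 1) / ln 2))"
    by (intro sum_mono mult_left_mono log2_le_lin g p)
  also have "\<dots> = ((\<Sum>w\<in>S. p w * g w) - (\<Sum>w\<in>S. p w)) / ln 2"
    by (simp add: sum_divide_distrib[symmetric] sum_subtractf[symmetric] algebra_simps)
  also have "\<dots> \<le> 0" using s1 s2 by (simp add: divide_nonpos_pos)
  finally show ?thesis .
qed

lemma gibbs_eq:
  fixes p g :: "'w \<Rightarrow> real"
  assumes fin: "finite S" and p: "\<And>w. w \<in> S \<Longrightarrow> 0 \<le> p w" and g: "\<And>w. w \<in> S \<Longrightarrow> 0 < g w"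
    and s1: "(\<Sum>w\<in>S. p w * g w) \<le> 1" and s2: "(\<Sum>w\<in>S. p w) = 1"
    and eq: "(\<Sum>w\<in>S. p w * log 2 (g w)) = 0"
    and w: "w \<in> S" "0 < p w"
  shows "g w = 1"
proof -
  define d where "d w = p w * ((g w - 1) / ln 2 - log 2 (g w))" for w
  have dnn: "\<forall>w\<in>S. 0 \<le> d w"
    unfolding d_def using p g log2_le_lin by (simp add: mult_nonneg_nonneg)
  have "(\<Sum>w\<in>S. d w) = (\<Sum>w\<in>S. p w * ((g w - 1) / ln 2)) - (\<Sum>w\<in>S. p w * log 2 (g w))"
    unfolding d_def by (simp add: sum_subtractf[symmetric] right_diff_distrib)
  also have "\<dots> = ((\<Sum>w\<in>S. p w * g w) - (\<Sum>w\<in>S. p w)) / ln 2"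
    unfolding eq by (simp add: sum_divide_distrib[symmetric] sum_subtractf[symmetric] algebra_simps)
  also have "\<dots> \<le> 0" using s1 s2 by (simp add: divide_nonpos_pos)
  moreover have "0 \<le> (\<Sum>w\<in>S. d w)" using dnn by (simp add: sum_nonneg)
  ultimately have "(\<Sum>w\<in>S. d w) = 0" by linarith
  then have "d w = 0" using sum_nonneg_eq_0_iff[OF fin] dnn w(1) by blast
  then have "(g w - 1) / ln 2 = log 2 (g w)" unfolding d_def using w(2) by simp
  then have "ln (g w) = g w - 1" unfolding log_def by (simp add: divide_cancel_right)
  then show ?thesis using g[OF w(1)] ln_eq_minus_one by blast
qed

lemma marg:
  assumes fin: "finite (set_pmf mu)"
  shows "(\<Sum>y\<in>Y ` set_pmf mu. pmf (map_pmf (\<lambda>w. (Y w, Z w)) mu) (y, z)) = pmf (map_pmf Z mu) z"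
proof -
  let ?S = "{w\<in>set_pmf mu. Z w = z}"
  have "(\<Sum>y\<in>Y ` set_pmf mu. pmf (map_pmf (\<lambda>w. (Y w, Z w)) mu) (y, z))
      = (\<Sum>y\<in>Y ` set_pmf mu. \<Sum>w\<in>{w\<in>?S. Y w = y}. pmf mu w)"
    unfolding pmf_map_sum[OF fin]
    by (intro sum.cong refl arg_cong[where f="sum (pmf mu)"]) auto
  also have "\<dots> = (\<Sum>y\<in>Y ` ?S. \<Sum>w\<in>{w\<in>?S. Y w = y}. pmf mu w)"
  proof (rule sum.mono_neutral_right)
    show "finite (Y ` set_pmf mu)" using fin by simp
    show "Y ` ?S \<subseteq> Y ` set_pmf mu" by blast
    have e: "{w\<in>?S. Y w = y} = {}" if "y \<notin> Y ` ?S" for y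
    proof (rule equals0I)
      fix w assume "w \<in> {w\<in>?S. Y w = y}"
      then have "w \<in> ?S" "y = Y w" by auto
      then have "y \<in> Y ` ?S" by (rule rev_image_eqI)
      with that show False by contradiction
    qed
    show "\<forall>y \<in> Y ` set_pmf mu - Y ` ?S. (\<Sum>w\<in>{w\<in>?S. Y w = y}. pmf mu w) = 0"
    proof
      fix y assume "y \<in> Y ` set_pmf mu - Y ` ?S"
      then have "{w\<in>?S. Y w = y} = {}" using e by blast
      then show "(\<Sum>w\<in>{w\<in>?S. Y w = y}. pmf mu w) = 0" by (simp only: sum.empty)
    qed
  qed
  also have "\<dots> = (\<Sum>w\<in>?S. pmf mu w)" by (rule sum.image_gen[symmetric]) (simp add: fin)
  also have "\<dots> = pmf (map_pmf Z mu) z" by (simp add: pmf_map_sum[OF fin])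
  finally show ?thesis .
qed

lemma sum_pmf_map_1:
  assumes fin: "finite (set_pmf mu)"
  shows "(\<Sum>x\<in>X ` set_pmf mu. pmf (map_pmf X mu) x) = 1"
  by (rule sum_pmf_eq_1) (auto simp: fin)

lemma pmf_map_pos': "x \<in> X ` set_pmf mu \<Longrightarrow> 0 < pmf (map_pmf X mu) x"
  by (simp add: pmf_positive)

lemma submod:
  assumes fin: "finite (set_pmf mu)"
  shows "ent mu (\<lambda>w. (X w, Y w, Z w)) + ent mu Z \<le> ent mu (\<lambda>w. (X w, Z w)) + ent mu (\<lambda>w. (Y w, Z w))"
proof -
  let ?T = "\<lambda>w. (X w, Y w, Z w)"
  let ?XZ = "\<lambda>w. (X w, Z w)"
  let ?YZ = "\<lambda>w. (Y w, Z w)"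
  define a where "a w = pmf (map_pmf ?XZ mu) (?XZ w)" for w
  define b where "b w = pmf (map_pmf ?YZ mu) (?YZ w)" for w
  define c where "c w = pmf (map_pmf Z mu) (Z w)" for w
  define d where "d w = pmf (map_pmf ?T mu) (?T w)" for w
  define g where "g w = a w * b w / (c w * d w)" for w
  have pos: "0 < a w" "0 < b w" "0 < c w" "0 < d w" if "w \<in> set_pmf mu" for w
    unfolding a_def b_def c_def d_def
    using pmf_map_pos[OF that, of ?XZ] pmf_map_pos[OF that, of ?YZ] pmf_map_pos[OF that, of Z]
      pmf_map_pos[OF that, of ?T] by simp_all
  have lg: "log 2 (g w) = log 2 (a w) + log 2 (b w) - log 2 (c w) - log 2 (d w)"
    if w: "w \<in> set_pmf mu" for w
  proof -
    have "a w \<noteq> 0" "b w \<noteq> 0" "c w \<noteq> 0" "d w \<noteq> 0" using pos[OF w] by auto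
    then show ?thesis unfolding g_def by (simp add: log_mult log_divide)
  qed
  have "(\<Sum>w\<in>set_pmf mu. pmf mu w * log 2 (g w))
      = (\<Sum>w\<in>set_pmf mu. pmf mu w * log 2 (a w)) + (\<Sum>w\<in>set_pmf mu. pmf mu w * log 2 (b w))
        - (\<Sum>w\<in>set_pmf mu. pmf mu w * log 2 (c w)) - (\<Sum>w\<in>set_pmf mu. pmf mu w * log 2 (d w))"
    by (simp add: lg algebra_simps sum.distrib sum_subtractf cong: sum.cong)
  also have "\<dots> = ent mu ?T + ent mu Z - ent mu ?XZ - ent mu ?YZ"
    unfolding ent_repr[OF fin] a_def b_def c_def d_def by simp
  finally have eq1: "(\<Sum>w\<in>set_pmf mu. pmf mu w * log 2 (g w)) = ent mu ?T + ent mu Z - ent mu ?XZ - ent mu ?YZ" .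
  define h where "h t = pmf (map_pmf ?XZ mu) (fst t, snd (snd t)) * pmf (map_pmf ?YZ mu) (snd t)
      / (pmf (map_pmf Z mu) (snd (snd t)) * pmf (map_pmf ?T mu) t)" for t
  define F where "F t = pmf (map_pmf ?XZ mu) (fst t, snd (snd t)) * pmf (map_pmf ?YZ mu) (snd t)
      / pmf (map_pmf Z mu) (snd (snd t))" for t
  let ?phi = "\<lambda>((x::'b, z::'d), y::'c). (x, y, z)"
  have "(\<Sum>w\<in>set_pmf mu. pmf mu w * g w) = (\<Sum>w\<in>set_pmf mu. pmf mu w * h (?T w))"
    by (simp add: g_def h_def a_def b_def c_def d_def)
  also have "\<dots> = (\<Sum>t\<in>?T ` set_pmf mu. pmf (map_pmf ?T mu) t * h t)"
    by (rule sum_group_map[OF fin])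
  also have "\<dots> = (\<Sum>t\<in>?T ` set_pmf mu. F t)"
  proof (rule sum.cong[OF refl])
    fix t assume "t \<in> ?T ` set_pmf mu"
    then have "0 < pmf (map_pmf ?T mu) t" by (rule pmf_map_pos')
    then show "pmf (map_pmf ?T mu) t * h t = F t" unfolding h_def F_def by simp
  qed
  also have "\<dots> \<le> (\<Sum>t\<in>?phi ` (?XZ ` set_pmf mu \<times> Y ` set_pmf mu). F t)"
  proof (rule sum_mono2)
    show "finite (?phi ` (?XZ ` set_pmf mu \<times> Y ` set_pmf mu))" using fin by simp
    show "?T ` set_pmf mu \<subseteq> ?phi ` (?XZ ` set_pmf mu \<times> Y ` set_pmf mu)"
    proof
      fix t assume "t \<in> ?T ` set_pmf mu"
      then obtain w where w: "w \<in> set_pmf mu" "t = ?T w" by blast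
      have "((X w, Z w), Y w) \<in> ?XZ ` set_pmf mu \<times> Y ` set_pmf mu" using w by blast
      moreover have "t = ?phi ((X w, Z w), Y w)" using w by simp
      ultimately show "t \<in> ?phi ` (?XZ ` set_pmf mu \<times> Y ` set_pmf mu)" by (rule rev_image_eqI)
    qed
    show "0 \<le> F t" for t unfolding F_def by simp
  qed
  also have "\<dots> = (\<Sum>u\<in>?XZ ` set_pmf mu \<times> Y ` set_pmf mu. F (?phi u))"
    by (subst sum.reindex) (auto simp: inj_on_def comp_def)
  also have "\<dots> = (\<Sum>xz\<in>?XZ ` set_pmf mu. \<Sum>y\<in>Y ` set_pmf mu. F (?phi (xz, y)))"
    by (simp only: sum.cartesian_product) (rule sum.cong; auto)
  also have "\<dots> = (\<Sum>xz\<in>?XZ ` set_pmf mu. pmf (map_pmf ?XZ mu) xz / pmf (map_pmf Z mu) (snd xz)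
                     * (\<Sum>y\<in>Y ` set_pmf mu. pmf (map_pmf ?YZ mu) (y, snd xz)))"
    by (simp add: F_def sum_distrib_left split_beta)
  also have "\<dots> = (\<Sum>xz\<in>?XZ ` set_pmf mu. pmf (map_pmf ?XZ mu) xz)"
  proof (rule sum.cong[OF refl])
    fix xz assume "xz \<in> ?XZ ` set_pmf mu"
    then obtain w where w: "w \<in> set_pmf mu" "xz = ?XZ w" by blast
    then have "0 < pmf (map_pmf Z mu) (snd xz)" using pmf_map_pos[of w mu Z] by simp
    then show "pmf (map_pmf ?XZ mu) xz / pmf (map_pmf Z mu) (snd xz)
                     * (\<Sum>y\<in>Y ` set_pmf mu. pmf (map_pmf ?YZ mu) (y, snd xz)) = pmf (map_pmf ?XZ mu) xz"
      by (simp add: marg[OF fin])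
  qed
  also have "\<dots> = 1" by (rule sum_pmf_map_1[OF fin])
  finally have sg: "(\<Sum>w\<in>set_pmf mu. pmf mu w * g w) \<le> 1" .
  have "(\<Sum>w\<in>set_pmf mu. pmf mu w * log 2 (g w)) \<le> 0"
  proof (rule gibbs[OF fin])
    show "0 < g w" if "w \<in> set_pmf mu" for w unfolding g_def using pos[OF that] by simp
    show "(\<Sum>w\<in>set_pmf mu. pmf mu w) = 1" by (rule sum_pmf_eq_1) (auto simp: fin)
  qed (use sg in auto)
  with eq1 show ?thesis by simp
qed

lemma ent_const: "ent mu (\<lambda>w. c) = 0"
  unfolding ent_def by simp

lemma ent_unif:
  assumes "map_pmf X mu = pmf_of_set A" "finite A" "A \<noteq> {}"
  shows "ent mu X = log 2 (real (card A))"
proof -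
  have c: "0 < card A" using assms by (simp add: card_gt_0_iff)
  have "ent mu X = (\<Sum>x\<in>A. - (1 / card A * log 2 (1 / card A)))"
    unfolding ent_def assms(1) using assms by (intro sum.cong) auto
  also have "\<dots> = - log 2 (1 / card A)" using c by simp
  also have "\<dots> = log 2 (card A)" using c by (simp add: log_divide)
  finally show ?thesis .
qed

lemma det_pair_eq:
  assumes fin: "finite (set_pmf mu)" and "detm mu X Y"
  shows "ent mu (\<lambda>w. (X w, Y w)) = ent mu Y"
proof (rule det_ent_eq[OF fin])
  show "detm mu (\<lambda>w. (X w, Y w)) Y"
  proof (rule detmI)
    fix w w' assume "w \<in> set_pmf mu" "w' \<in> set_pmf mu" "Y w = Y w'"
    moreover from detmD[OF assms(2) this] have "X w = X w'" .
    ultimately show "(X w, Y w) = (X w', Y w')" by simp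
  qed
  show "detm mu Y (\<lambda>w. (X w, Y w))" by (rule detmI) simp
qed

lemma subadd:
  assumes fin: "finite (set_pmf mu)"
  shows "ent mu (\<lambda>w. (X w, Y w)) \<le> ent mu X + ent mu Y"
proof -
  have "ent mu (\<lambda>w. (X w, Y w, ())) + ent mu (\<lambda>w. ()) \<le> ent mu (\<lambda>w. (X w, ())) + ent mu (\<lambda>w. (Y w, ()))"
    by (rule submod[OF fin])
  moreover have "ent mu (\<lambda>w. (X w, Y w, ())) = ent mu (\<lambda>w. (X w, Y w))"
    by (rule det_ent_eq[OF fin]) (auto simp: detm_def)
  moreover have "ent mu (\<lambda>w. (X w, ())) = ent mu X"
    by (rule det_ent_eq[OF fin]) (auto simp: detm_def)
  moreover have "ent mu (\<lambda>w. (Y w, ())) = ent mu Y"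
    by (rule det_ent_eq[OF fin]) (auto simp: detm_def)
  ultimately show ?thesis by (simp add: ent_const)
qed

lemma indep_ent:
  assumes fin: "finite (set_pmf mu)"
    and ind: "map_pmf (\<lambda>w. (X w, Y w)) mu = pair_pmf (map_pmf X mu) (map_pmf Y mu)"
  shows "ent mu (\<lambda>w. (X w, Y w)) = ent mu X + ent mu Y"
proof -
  have "ent mu (\<lambda>w. (X w, Y w)) = - (\<Sum>w\<in>set_pmf mu. pmf mu w *
      (log 2 (pmf (map_pmf X mu) (X w)) + log 2 (pmf (map_pmf Y mu) (Y w))))"
    unfolding ent_repr[OF fin]
  proof (intro arg_cong[where f=uminus] sum.cong refl)
    fix w assume w: "w \<in> set_pmf mu"
    have "pmf (map_pmf X mu) (X w) \<noteq> 0" "pmf (map_pmf Y mu) (Y w) \<noteq> 0"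
      using pmf_map_pos[OF w, of X] pmf_map_pos[OF w, of Y] by auto
    then show "pmf mu w * log 2 (pmf (map_pmf (\<lambda>w. (X w, Y w)) mu) (X w, Y w)) =
         pmf mu w * (log 2 (pmf (map_pmf X mu) (X w)) + log 2 (pmf (map_pmf Y mu) (Y w)))"
      unfolding ind pmf_pair by (simp add: log_mult)
  qed
  also have "\<dots> = ent mu X + ent mu Y"
    unfolding ent_repr[OF fin] by (simp add: distrib_left sum.distrib)
  finally show ?thesis .
qed

lemma zero_cond_det:
  assumes fin: "finite (set_pmf mu)" and eq: "ent mu (\<lambda>w. (X w, Y w)) = ent mu Y"
  shows "detm mu X Y"
proof -
  let ?XY = "\<lambda>w. (X w, Y w)"
  have d1: "detm mu Y ?XY" by (auto simp: detm_def)
  define t where "t w = pmf mu w * (log 2 (pmf (map_pmf Y mu) (Y w)) - log 2 (pmf (map_pmf ?XY mu) (?XY w)))" for w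
  have tnn: "\<forall>w\<in>set_pmf mu. 0 \<le> t w"
  proof
    fix w assume w: "w \<in> set_pmf mu"
    have "log 2 (pmf (map_pmf ?XY mu) (?XY w)) \<le> log 2 (pmf (map_pmf Y mu) (Y w))"
      using det_pmf_le[OF d1 w] pmf_map_pos[OF w, of ?XY] by (intro log_mono) auto
    then show "0 \<le> t w" unfolding t_def by simp
  qed
  have "(\<Sum>w\<in>set_pmf mu. t w) = ent mu ?XY - ent mu Y"
    unfolding t_def ent_repr[OF fin] by (simp add: right_diff_distrib sum_subtractf)
  then have "(\<Sum>w\<in>set_pmf mu. t w) = 0" using eq by simp
  then have t0: "\<forall>w\<in>set_pmf mu. t w = 0" using sum_nonneg_eq_0_iff[OF fin] tnn by blast
  have peq: "pmf (map_pmf ?XY mu) (?XY w) = pmf (map_pmf Y mu) (Y w)" if w: "w \<in> set_pmf mu" for w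
  proof -
    have "t w = 0" using t0 w by blast
    moreover have "0 < pmf mu w" using w by (simp add: pmf_positive)
    ultimately have "log 2 (pmf (map_pmf Y mu) (Y w)) = log 2 (pmf (map_pmf ?XY mu) (?XY w))"
      unfolding t_def by simp
    then have "2 powr log 2 (pmf (map_pmf Y mu) (Y w)) = 2 powr log 2 (pmf (map_pmf ?XY mu) (?XY w))"
      by simp
    then show ?thesis using pmf_map_pos[OF w, of ?XY] pmf_map_pos[OF w, of Y] by simp
  qed
  show ?thesis unfolding detm_def
  proof (intro ballI impI)
    fix w w' assume w: "w \<in> set_pmf mu" and w': "w' \<in> set_pmf mu" and yy: "Y w = Y w'"
    show "X w = X w'"
    proof (rule ccontr)
      assume ne: "X w \<noteq> X w'"
      have "pmf (map_pmf Y mu) (Y w) = measure mu {v. Y v = Y w}" by (rule pmf_map_meas)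
      also have "\<dots> \<ge> measure mu ({v. ?XY v = ?XY w} \<union> {w'})"
      proof (rule measure_pmf.finite_measure_mono)
        show "{v. ?XY v = ?XY w} \<union> {w'} \<subseteq> {v. Y v = Y w}" using yy by auto
      qed simp
      also have "measure mu ({v. ?XY v = ?XY w} \<union> {w'}) = measure mu {v. ?XY v = ?XY w} + measure mu {w'}"
      proof (rule measure_pmf.finite_measure_Union)
        show "{v. ?XY v = ?XY w} \<inter> {w'} = {}" using ne by auto
      qed simp_all
      also have "measure mu {v. ?XY v = ?XY w} = pmf (map_pmf ?XY mu) (?XY w)" by (rule pmf_map_meas[symmetric])
      also have "measure mu {w'} = pmf mu w'" by (rule measure_pmf_single)
      finally have "pmf (map_pmf ?XY mu) (?XY w) + pmf mu w' \<le> pmf (map_pmf Y mu) (Y w)" .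
      moreover have "0 < pmf mu w'" using w' by (simp add: pmf_positive)
      ultimately show False using peq[OF w] by simp
    qed
  qed
qed

lemma subadd_fun:
  assumes fin: "finite (set_pmf mu)" and K: "finite K"
  shows "ent mu (\<lambda>w k. if k \<in> K then X k w else undefined) \<le> (\<Sum>k\<in>K. ent mu (X k))"
  using K
proof (induction K rule: finite_induct)
  case empty
  then show ?case by (simp add: ent_const)
next
  case (insert k K)
  let ?F = "\<lambda>w j. if j \<in> K then X j w else undefined"
  let ?G = "\<lambda>w j. if j \<in> insert k K then X j w else undefined"
  have "ent mu ?G = ent mu (\<lambda>w. (X k w, ?F w))"
  proof (rule det_ent_eq[OF fin])
    show "detm mu ?G (\<lambda>w. (X k w, ?F w))" unfolding detm_def
    proof (intro ballI impI)
      fix w w' assume "(X k w, ?F w) = (X k w', ?F w')"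
      then have "X k w = X k w'" "\<And>j. j \<in> K \<Longrightarrow> X j w = X j w'" by (auto simp: fun_eq_iff split: if_splits)
      then show "?G w = ?G w'" by (auto simp: fun_eq_iff)
    qed
    show "detm mu (\<lambda>w. (X k w, ?F w)) ?G" unfolding detm_def
    proof (intro ballI impI)
      fix w w' assume "?G w = ?G w'"
      then have "\<And>j. j \<in> insert k K \<Longrightarrow> X j w = X j w'" by (auto simp: fun_eq_iff split: if_splits)
      then show "(X k w, ?F w) = (X k w', ?F w')" by (auto simp: fun_eq_iff)
    qed
  qed
  also have "\<dots> \<le> ent mu (X k) + ent mu ?F" by (rule subadd[OF fin])
  also have "\<dots> \<le> ent mu (X k) + (\<Sum>k\<in>K. ent mu (X k))" using insert.IH by simp
  also have "\<dots> = (\<Sum>k\<in>insert k K. ent mu (X k))" using insert.hyps by simp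
  finally show ?case .
qed

lemma eq_indep:
  assumes fin: "finite (set_pmf mu)"
    and eq: "ent mu (\<lambda>w. (X w, Y w)) = ent mu X + ent mu Y"
  shows "map_pmf (\<lambda>w. (X w, Y w)) mu = pair_pmf (map_pmf X mu) (map_pmf Y mu)"
proof -
  let ?XY = "\<lambda>w. (X w, Y w)"
  define a where "a w = pmf (map_pmf X mu) (X w)" for w
  define b where "b w = pmf (map_pmf Y mu) (Y w)" for w
  define d where "d w = pmf (map_pmf ?XY mu) (?XY w)" for w
  define g where "g w = a w * b w / d w" for w
  define G where "G t = pmf (map_pmf X mu) (fst t) * pmf (map_pmf Y mu) (snd t)" for t
  define h where "h t = G t / pmf (map_pmf ?XY mu) t" for t
  have pos: "0 < a w" "0 < b w" "0 < d w" if "w \<in> set_pmf mu" for w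
    unfolding a_def b_def d_def
    using pmf_map_pos[OF that, of X] pmf_map_pos[OF that, of Y] pmf_map_pos[OF that, of ?XY] by simp_all
  have lg: "log 2 (g w) = log 2 (a w) + log 2 (b w) - log 2 (d w)" if w: "w \<in> set_pmf mu" for w
  proof -
    have "a w \<noteq> 0" "b w \<noteq> 0" "d w \<noteq> 0" using pos[OF w] by auto
    then show ?thesis unfolding g_def by (simp add: log_mult log_divide)
  qed
  have "(\<Sum>w\<in>set_pmf mu. pmf mu w * log 2 (g w))
      = (\<Sum>w\<in>set_pmf mu. pmf mu w * log 2 (a w)) + (\<Sum>w\<in>set_pmf mu. pmf mu w * log 2 (b w))
        - (\<Sum>w\<in>set_pmf mu. pmf mu w * log 2 (d w))"
    by (simp add: lg algebra_simps sum.distrib sum_subtractf cong: sum.cong)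
  also have "\<dots> = ent mu ?XY - ent mu X - ent mu Y"
    unfolding ent_repr[OF fin] a_def b_def d_def by simp
  finally have eq1: "(\<Sum>w\<in>set_pmf mu. pmf mu w * log 2 (g w)) = 0" using eq by simp
  let ?PR = "X ` set_pmf mu \<times> Y ` set_pmf mu"
  have sub: "?XY ` set_pmf mu \<subseteq> ?PR" by auto
  have finPR: "finite ?PR" using fin by simp
  have Gnn: "0 \<le> G t" for t unfolding G_def by simp
  have sPR: "(\<Sum>t\<in>?PR. G t) = 1"
  proof -
    have "(\<Sum>t\<in>?PR. G t) = (\<Sum>x\<in>X ` set_pmf mu. \<Sum>y\<in>Y ` set_pmf mu. G (x, y))"
      by (simp only: sum.cartesian_product) (rule sum.cong; auto)
    also have "\<dots> = (\<Sum>x\<in>X ` set_pmf mu. pmf (map_pmf X mu) x) * (\<Sum>y\<in>Y ` set_pmf mu. pmf (map_pmf Y mu) y)"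
      unfolding G_def by (simp add: sum_product)
    also have "\<dots> = 1" by (simp add: sum_pmf_map_1[OF fin])
    finally show ?thesis .
  qed
  have "(\<Sum>w\<in>set_pmf mu. pmf mu w * g w) = (\<Sum>w\<in>set_pmf mu. pmf mu w * h (?XY w))"
    by (simp add: g_def h_def a_def b_def d_def G_def)
  also have "\<dots> = (\<Sum>t\<in>?XY ` set_pmf mu. pmf (map_pmf ?XY mu) t * h t)"
    by (rule sum_group_map[OF fin])
  also have sG: "\<dots> = (\<Sum>t\<in>?XY ` set_pmf mu. G t)"
  proof (rule sum.cong[OF refl])
    fix t assume "t \<in> ?XY ` set_pmf mu"
    then have "0 < pmf (map_pmf ?XY mu) t" by (rule pmf_map_pos')
    then show "pmf (map_pmf ?XY mu) t * h t = G t" unfolding h_def by simp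
  qed
  finally have sg_eq: "(\<Sum>w\<in>set_pmf mu. pmf mu w * g w) = (\<Sum>t\<in>?XY ` set_pmf mu. G t)" .
  have sXY_le: "(\<Sum>t\<in>?XY ` set_pmf mu. G t) \<le> 1"
    using sum_mono2[OF finPR sub, of G] Gnn sPR by simp
  have p1: "(\<Sum>w\<in>set_pmf mu. pmf mu w) = 1" by (rule sum_pmf_eq_1) (auto simp: fin)
  have g1: "g w = 1" if w: "w \<in> set_pmf mu" for w
  proof (rule gibbs_eq[OF fin _ _ _ p1 eq1 w])
    show "0 < g w" if "w \<in> set_pmf mu" for w unfolding g_def using pos[OF that] by simp
    show "(\<Sum>w\<in>set_pmf mu. pmf mu w * g w) \<le> 1" using sg_eq sXY_le by simp
    show "0 < pmf mu w" using w by (simp add: pmf_positive)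
  qed simp
  have onimg: "pmf (map_pmf ?XY mu) t = G t" if t: "t \<in> ?XY ` set_pmf mu" for t
  proof -
    obtain w where w: "w \<in> set_pmf mu" "t = ?XY w" using t by blast
    have "a w * b w / d w = 1" using g1[OF w(1)] unfolding g_def .
    then have "d w = a w * b w" using pos[OF w(1)] by (simp add: field_simps)
    then show ?thesis using w unfolding d_def a_def b_def G_def by simp
  qed
  have sXY1: "(\<Sum>t\<in>?XY ` set_pmf mu. G t) = 1"
  proof -
    have "(\<Sum>t\<in>?XY ` set_pmf mu. G t) = (\<Sum>t\<in>?XY ` set_pmf mu. pmf (map_pmf ?XY mu) t)"
      using onimg by simp
    also have "\<dots> = 1" by (rule sum_pmf_map_1[OF fin])
    finally show ?thesis .
  qed
  show ?thesis
  proof (rule pmf_eqI)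
    fix t :: "'b \<times> 'c"
    show "pmf (map_pmf ?XY mu) t = pmf (pair_pmf (map_pmf X mu) (map_pmf Y mu)) t"
    proof (cases "t \<in> ?XY ` set_pmf mu")
      case True
      then show ?thesis using onimg[OF True] unfolding G_def by (cases t) (simp add: pmf_pair)
    next
      case False
      then have z: "pmf (map_pmf ?XY mu) t = 0" by (simp add: pmf_eq_0_set_pmf)
      have "G t = 0"
      proof (rule ccontr)
        assume "G t \<noteq> 0"
        then have gp: "0 < G t" using Gnn[of t] by simp
        then have "pmf (map_pmf X mu) (fst t) \<noteq> 0" "pmf (map_pmf Y mu) (snd t) \<noteq> 0"
          unfolding G_def by auto
        then have "fst t \<in> X ` set_pmf mu" "snd t \<in> Y ` set_pmf mu"
          by (simp_all add: pmf_eq_0_set_pmf)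
        then have tPR: "t \<in> ?PR" by (cases t) auto
        have "(\<Sum>t'\<in>insert t (?XY ` set_pmf mu). G t') \<le> (\<Sum>t'\<in>?PR. G t')"
          by (rule sum_mono2[OF finPR]) (use sub tPR Gnn in auto)
        moreover have "(\<Sum>t'\<in>insert t (?XY ` set_pmf mu). G t') = G t + 1"
          using False fin sXY1 by simp
        ultimately show False using sPR gp by simp
      qed
      then show ?thesis using z unfolding G_def by (cases t) (simp add: pmf_pair)
    qed
  qed
qed

lemma ent_map_eq: "map_pmf X mu = map_pmf Y nu \<Longrightarrow> ent mu X = ent nu Y"
  unfolding ent_def by simp

lemma pair_indep:
  "map_pmf (\<lambda>w. (f (fst w), g (snd w))) (pair_pmf A B)
   = pair_pmf (map_pmf (\<lambda>w. f (fst w)) (pair_pmf A B)) (map_pmf (\<lambda>w. g (snd w)) (pair_pmf A B))"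
proof -
  have "map_pmf (\<lambda>w. (f (fst w), g (snd w))) (pair_pmf A B) = map_pmf (\<lambda>(a, b). (f a, g b)) (pair_pmf A B)"
    by (intro map_pmf_cong) auto
  also have "\<dots> = pair_pmf (map_pmf f A) (map_pmf g B)" by (rule map_pair)
  also have "map_pmf f A = map_pmf (\<lambda>w. f (fst w)) (pair_pmf A B)"
  proof -
    have "map_pmf (\<lambda>w. f (fst w)) (pair_pmf A B) = map_pmf f (map_pmf fst (pair_pmf A B))"
      by (simp add: map_pmf_comp)
    then show ?thesis unfolding map_fst_pair_pmf by simp
  qed
  also have "map_pmf g B = map_pmf (\<lambda>w. g (snd w)) (pair_pmf A B)"
  proof -
    have "map_pmf (\<lambda>w. g (snd w)) (pair_pmf A B) = map_pmf g (map_pmf snd (pair_pmf A B))"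
      by (simp add: map_pmf_comp)
    then show ?thesis unfolding map_snd_pair_pmf by simp
  qed
  finally show ?thesis .
qed

lemma fin_pair: "finite (set_pmf A) \<Longrightarrow> finite (set_pmf B) \<Longrightarrow> finite (set_pmf (pair_pmf A B))"
  by simp

lemma cond_red:
  assumes fin: "finite (set_pmf mu)"
  shows "ent mu (\<lambda>w. (Aa w, Y w)) - ent mu Aa \<le> ent mu (\<lambda>w. (s (Aa w), Y w)) - ent mu (\<lambda>w. s (Aa w))"
proof -
  have "ent mu (\<lambda>w. (Y w, Aa w, s (Aa w))) + ent mu (\<lambda>w. s (Aa w))
      \<le> ent mu (\<lambda>w. (Y w, s (Aa w))) + ent mu (\<lambda>w. (Aa w, s (Aa w)))"
    by (rule submod[OF fin])
  moreover have "ent mu (\<lambda>w. (Y w, Aa w, s (Aa w))) = ent mu (\<lambda>w. (Aa w, Y w))"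
    by (rule det_ent_eq[OF fin]) (auto intro!: detmI)
  moreover have "ent mu (\<lambda>w. (Y w, s (Aa w))) = ent mu (\<lambda>w. (s (Aa w), Y w))"
    by (rule det_ent_eq[OF fin]) (auto intro!: detmI)
  moreover have "ent mu (\<lambda>w. (Aa w, s (Aa w))) = ent mu Aa"
    by (rule det_ent_eq[OF fin]) (auto intro!: detmI)
  ultimately show ?thesis by simp
qed

lemma markov_ge:
  assumes fin: "finite (set_pmf mu)"
    and i1: "map_pmf (\<lambda>w. (Aa w, Bb w)) mu = pair_pmf (map_pmf Aa mu) (map_pmf Bb mu)"
    and i2: "map_pmf (\<lambda>w. (s (Aa w), Bb w)) mu = pair_pmf (map_pmf (\<lambda>w. s (Aa w)) mu) (map_pmf Bb mu)"
  shows "ent mu (\<lambda>w. (s (Aa w), y (s (Aa w)) (Bb w))) - ent mu (\<lambda>w. s (Aa w))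
       \<le> ent mu (\<lambda>w. (Aa w, y (s (Aa w)) (Bb w))) - ent mu Aa"
proof -
  let ?Y = "\<lambda>w. y (s (Aa w)) (Bb w)"
  let ?Sa = "\<lambda>w. s (Aa w)"
  have "ent mu (\<lambda>w. (Bb w, Aa w, (?Sa w, ?Y w))) + ent mu (\<lambda>w. (?Sa w, ?Y w))
      \<le> ent mu (\<lambda>w. (Bb w, (?Sa w, ?Y w))) + ent mu (\<lambda>w. (Aa w, (?Sa w, ?Y w)))"
    by (rule submod[OF fin])
  moreover have "ent mu (\<lambda>w. (Bb w, Aa w, (?Sa w, ?Y w))) = ent mu (\<lambda>w. (Aa w, Bb w))"
    by (rule det_ent_eq[OF fin]) (auto intro!: detmI)
  moreover have "ent mu (\<lambda>w. (Aa w, Bb w)) = ent mu Aa + ent mu Bb"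
    by (rule indep_ent[OF fin i1])
  moreover have "ent mu (\<lambda>w. (Bb w, (?Sa w, ?Y w))) = ent mu (\<lambda>w. (?Sa w, Bb w))"
    by (rule det_ent_eq[OF fin]) (auto intro!: detmI)
  moreover have "ent mu (\<lambda>w. (?Sa w, Bb w)) = ent mu ?Sa + ent mu Bb"
    by (rule indep_ent[OF fin i2])
  moreover have "ent mu (\<lambda>w. (Aa w, (?Sa w, ?Y w))) = ent mu (\<lambda>w. (Aa w, ?Y w))"
    by (rule det_ent_eq[OF fin]) (auto intro!: detmI)
  ultimately show ?thesis by simp
qed

lemma markov_eq_pair:
  assumes fA: "finite (set_pmf A)" and fB: "finite (set_pmf B)"
  defines "mu \<equiv> pair_pmf A B"
  shows "ent mu (\<lambda>w. (a (fst w), y (s (a (fst w))) (snd w))) - ent mu (\<lambda>w. a (fst w))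
       = ent mu (\<lambda>w. (s (a (fst w)), y (s (a (fst w))) (snd w))) - ent mu (\<lambda>w. s (a (fst w)))"
proof -
  have fin: "finite (set_pmf mu)" unfolding mu_def using fA fB by simp
  have i1: "map_pmf (\<lambda>w. (a (fst w), snd w)) mu = pair_pmf (map_pmf (\<lambda>w. a (fst w)) mu) (map_pmf snd mu)"
    unfolding mu_def using pair_indep[of a id A B] by simp
  have i2: "map_pmf (\<lambda>w. (s (a (fst w)), snd w)) mu = pair_pmf (map_pmf (\<lambda>w. s (a (fst w))) mu) (map_pmf snd mu)"
    unfolding mu_def using pair_indep[of "\<lambda>x. s (a x)" id A B] by simp
  show ?thesis
    using markov_ge[OF fin i1 i2, of y] cond_red[OF fin, of "\<lambda>w. a (fst w)" "\<lambda>w. y (s (a (fst w))) (snd w)" s]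
    by simp
qed

lemma map_fst_comp: "map_pmf (\<lambda>w. f (fst w)) (pair_pmf A B) = map_pmf f A"
proof -
  have "map_pmf (\<lambda>w. f (fst w)) (pair_pmf A B) = map_pmf f (map_pmf fst (pair_pmf A B))"
    by (simp add: map_pmf_comp)
  then show ?thesis unfolding map_fst_pair_pmf .
qed

lemma map_snd_comp: "map_pmf (\<lambda>w. f (snd w)) (pair_pmf A B) = map_pmf f B"
proof -
  have "map_pmf (\<lambda>w. f (snd w)) (pair_pmf A B) = map_pmf f (map_pmf snd (pair_pmf A B))"
    by (simp add: map_pmf_comp)
  then show ?thesis unfolding map_snd_pair_pmf .
qed

locale pirloc =
  fixes V :: "'s set" and E :: "'s set set" and L :: nat
    and P :: "('s set \<times> ('s \<Rightarrow> 'q)) pmf"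
    and ans :: "'s \<Rightarrow> 'q \<Rightarrow> ('s set \<Rightarrow> bool list) \<Rightarrow> 'a"
    and S :: 's and nb :: "nat \<Rightarrow> 's"
  assumes pir: "pir_scheme V E L P ans" and SV: "S \<in> V"
    and bij: "bij_betw nb {1..card (nbrs E S)} (nbrs E S)"
begin

definition "dl = card (nbrs E S)"
definition "ed k = {S, nb k}"
definition "Fd = file_dist E L"
definition "mu = pir_space P E L"
definition "Lset = {xs :: bool list. length xs = L}"

lemma sg: "simple_graph V E" and Ene: "E \<noteq> {}" and finP: "finite (set_pmf P)"
  and margP: "map_pmf fst P = pmf_of_set E"
  using pir unfolding pir_scheme_def by auto

lemma rel: "cond_ent mu (\<lambda>om. snd om (fst (fst om)))
       (\<lambda>om. (\<lambda>T. if T \<in> V then Some (snd (fst om) T) else None,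
              \<lambda>T. if T \<in> V then Some (answer E ans T om) else None)) = 0"
  using pir unfolding pir_scheme_def mu_def by auto

lemma priv: "T \<in> V \<Longrightarrow> cond_ent mu (\<lambda>om. fst (fst om))
        (\<lambda>om. (snd (fst om) T, stored_files E T (snd om))) = log 2 (real (card E))"
  using pir unfolding pir_scheme_def mu_def by auto

lemma finV: "finite V" using sg unfolding simple_graph_def by auto

lemma finE: "finite E"
proof -
  have "E \<subseteq> Pow V" using sg unfolding simple_graph_def by auto
  then show ?thesis using finV by (rule finite_subset[OF _ finite_Pow_iff[THEN iffD2]])
qed

lemma eqL: "Lset = {xs. set xs \<subseteq> (UNIV :: bool set) \<and> length xs = L}" unfolding Lset_def by auto

lemma finLset: "finite Lset" and Lset_ne: "Lset \<noteq> {}"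
proof -
  show "finite Lset" unfolding eqL by (rule finite_lists_length_eq) simp
  have "replicate L True \<in> Lset" unfolding Lset_def by simp
  then show "Lset \<noteq> {}" by blast
qed

lemma card_Lset: "card Lset = 2 ^ L"
  unfolding eqL by (subst card_lists_length_eq) simp_all

lemma Fd_Pi: "Fd = Pi_pmf E [] (\<lambda>_. pmf_of_set Lset)"
  unfolding Fd_def file_dist_def Lset_def ..

lemma finFd: "finite (set_pmf Fd)"
proof -
  have "set_pmf Fd = PiE_dflt E [] (set_pmf \<circ> (\<lambda>_. pmf_of_set Lset))"
    unfolding Fd_Pi by (rule set_Pi_pmf[OF finE])
  also have "\<dots> = PiE_dflt E [] (\<lambda>_. Lset)" using finLset Lset_ne by (simp add: comp_def)
  finally show ?thesis using finE finLset by auto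
qed

lemma mu_pair: "mu = pair_pmf P Fd" unfolding mu_def pir_space_def Fd_def ..

lemma finmu: "finite (set_pmf mu)" unfolding mu_pair using finP finFd by simp

lemma lawP:
  assumes T: "T \<in> V"
  shows "map_pmf (\<lambda>p. (fst p, snd p T)) P = pair_pmf (map_pmf fst P) (map_pmf (\<lambda>p. snd p T) P)"
proof -
  let ?th = "\<lambda>w::('s set \<times> ('s \<Rightarrow> 'q)) \<times> ('s set \<Rightarrow> bool list). fst (fst w)"
  let ?Y = "\<lambda>w::('s set \<times> ('s \<Rightarrow> 'q)) \<times> ('s set \<Rightarrow> bool list). (snd (fst w) T, stored_files E T (snd w))"
  have mth: "map_pmf ?th mu = pmf_of_set E"
    unfolding mu_pair map_fst_comp by (rule margP)
  have hth: "ent mu ?th = log 2 (real (card E))"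
    by (rule ent_unif[OF mth finE Ene])
  have "ent mu (\<lambda>w. (?th w, ?Y w)) = ent mu ?th + ent mu ?Y"
    using priv[OF T] hth unfolding cond_ent_def by simp
  then have ind: "map_pmf (\<lambda>w. (?th w, ?Y w)) mu = pair_pmf (map_pmf ?th mu) (map_pmf ?Y mu)"
    by (rule eq_indep[OF finmu])
  have "map_pmf (\<lambda>(t, y). (t, fst y)) (map_pmf (\<lambda>w. (?th w, ?Y w)) mu)
      = map_pmf (\<lambda>(t, y). (id t, fst y)) (pair_pmf (map_pmf ?th mu) (map_pmf ?Y mu))"
    unfolding ind by simp
  then have "map_pmf (\<lambda>w. (?th w, snd (fst w) T)) mu = pair_pmf (map_pmf ?th mu) (map_pmf (\<lambda>w. snd (fst w) T) mu)"
    unfolding map_pair by (simp add: map_pmf_comp)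
  moreover have "map_pmf (\<lambda>w. (fst (fst w), snd (fst w) T)) (pair_pmf P Fd) = map_pmf (\<lambda>p. (fst p, snd p T)) P"
    using map_fst_comp[of "\<lambda>p. (fst p, snd p T)" P Fd] by simp
  moreover have "map_pmf (\<lambda>w. snd (fst w) T) (pair_pmf P Fd) = map_pmf (\<lambda>p. snd p T) P"
    using map_fst_comp[of "\<lambda>p. snd p T" P Fd] by simp
  ultimately show ?thesis unfolding mu_pair map_fst_comp by simp
qed

lemma lawQ:
  assumes T: "T \<in> V" and e: "e \<in> E"
  shows "map_pmf (\<lambda>p. snd p T) (cond_pmf P {p. fst p = e}) = map_pmf (\<lambda>p. snd p T) P"
proof -
  let ?s = "{p. fst p = e}"
  have "e \<in> set_pmf (map_pmf fst P)" using e margP finE Ene by simp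
  then have ne: "set_pmf P \<inter> ?s \<noteq> {}" by auto
  have ms: "measure P ?s = pmf (map_pmf fst P) e" by (simp add: pmf_map_meas)
  have mpos: "0 < pmf (map_pmf fst P) e" using e margP finE Ene by (simp add: card_gt_0_iff)
  have finc: "finite (set_pmf (cond_pmf P ?s))" using finP by (simp add: set_cond_pmf[OF ne])
  show ?thesis
  proof (rule pmf_eqI)
    fix q
    have "pmf (map_pmf (\<lambda>p. snd p T) (cond_pmf P ?s)) q
        = (\<Sum>p\<in>{p\<in>set_pmf (cond_pmf P ?s). snd p T = q}. pmf (cond_pmf P ?s) p)"
      by (rule pmf_map_sum[OF finc])
    also have "\<dots> = (\<Sum>p\<in>{p\<in>set_pmf P. (fst p, snd p T) = (e, q)}. pmf P p / measure P ?s)"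
      using ne by (intro sum.cong) (auto simp: set_cond_pmf pmf_cond)
    also have "\<dots> = pmf (map_pmf (\<lambda>p. (fst p, snd p T)) P) (e, q) / measure P ?s"
      by (simp add: pmf_map_sum[OF finP] sum_divide_distrib)
    also have "\<dots> = pmf (map_pmf (\<lambda>p. snd p T) P) q"
      unfolding lawP[OF T] pmf_pair ms using mpos by simp
    finally show "pmf (map_pmf (\<lambda>p. snd p T) (cond_pmf P ?s)) q = pmf (map_pmf (\<lambda>p. snd p T) P) q" .
  qed
qed

lemma transfer:
  fixes P' :: "('s set \<times> ('s \<Rightarrow> 'q)) pmf"
  assumes law: "map_pmf (\<lambda>p. snd p T) P' = map_pmf (\<lambda>p. snd p T) P"
  shows "ent (pair_pmf P' Fd) (\<lambda>w. h (snd (fst w) T) (snd w)) = ent mu (\<lambda>w. h (snd (fst w) T) (snd w))"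
proof (rule ent_map_eq)
  have eq: "map_pmf (\<lambda>w. h (snd (fst w) T) (snd w)) (pair_pmf A Fd)
      = map_pmf (case_prod h) (pair_pmf (map_pmf (\<lambda>p. snd p T) A) Fd)" for A :: "('s set \<times> ('s \<Rightarrow> 'q)) pmf"
  proof -
    have "map_pmf (\<lambda>w. h (snd (fst w) T) (snd w)) (pair_pmf A Fd)
       = map_pmf (case_prod h) (map_pmf (\<lambda>(a, b). ((\<lambda>p. snd p T) a, id b)) (pair_pmf A Fd))"
      by (simp add: map_pmf_comp split_beta)
    then show ?thesis unfolding map_pair by simp
  qed
  show "map_pmf (\<lambda>w. h (snd (fst w) T) (snd w)) (pair_pmf P' Fd) = map_pmf (\<lambda>w. h (snd (fst w) T) (snd w)) mu"
    unfolding mu_pair eq law ..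
qed

end

context pirloc begin

lemma nbI: "k \<in> {1..dl} \<Longrightarrow> nb k \<in> nbrs E S"
  unfolding dl_def by (rule bij_betw_apply[OF bij])

lemma edE: "k \<in> {1..dl} \<Longrightarrow> ed k \<in> E"
  using nbI unfolding nbrs_def ed_def by simp

lemma card_ed: "k \<in> {1..dl} \<Longrightarrow> card (ed k) = 2"
  using edE sg unfolding simple_graph_def by blast

lemma nbS: "k \<in> {1..dl} \<Longrightarrow> nb k \<noteq> S"
proof
  assume k: "k \<in> {1..dl}" and "nb k = S"
  then have "ed k = {S}" unfolding ed_def by simp
  then show False using card_ed[OF k] by simp
qed

lemma nbV: "k \<in> {1..dl} \<Longrightarrow> nb k \<in> V"
  using edE sg unfolding simple_graph_def ed_def by blast

lemma ed_inj: "k \<in> {1..dl} \<Longrightarrow> k' \<in> {1..dl} \<Longrightarrow> ed k = ed k' \<Longrightarrow> k = k'"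
proof -
  assume k: "k \<in> {1..dl}" and k': "k' \<in> {1..dl}" and eq: "ed k = ed k'"
  have "nb k \<in> ed k'" using eq unfolding ed_def by blast
  then have "nb k = nb k'" using nbS[OF k] unfolding ed_def by blast
  then show "k = k'" using bij_betw_imp_inj_on[OF bij] k k' unfolding dl_def inj_on_def by blast
qed

definition "Rb i F = (\<lambda>x. if x \<in> ed ` {i..dl} then [] else F x)"

lemma stored_Rb:
  assumes "T \<noteq> S" "T \<notin> nb ` {i..dl}"
  shows "stored_files E T (Rb i F) = stored_files E T F"
proof (rule ext)
  fix x
  show "stored_files E T (Rb i F) x = stored_files E T F x"
  proof (cases "x \<in> E \<and> T \<in> x \<and> x \<in> ed ` {i..dl}")
    case True
    then obtain k where k: "k \<in> {i..dl}" "x = ed k" by blast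
    then have "T \<in> {S, nb k}" using True unfolding ed_def by simp
    then have "T = S \<or> T = nb k" by simp
    moreover have "nb k \<in> nb ` {i..dl}" using k(1) by (rule imageI)
    ultimately show ?thesis using assms by auto
  next
    case False
    then show ?thesis unfolding stored_files_def Rb_def by auto
  qed
qed

lemma relD: "detm mu (\<lambda>om. snd om (fst (fst om)))
       (\<lambda>om. (\<lambda>T. if T \<in> V then Some (snd (fst om) T) else None,
              \<lambda>T. if T \<in> V then Some (answer E ans T om) else None))"
  by (rule zero_cond_det[OF finmu]) (subst eq_iff_diff_eq_0, rule rel[unfolded cond_ent_def])

definition "Pc i = cond_pmf P {p. fst p = ed i}"
definition "mc i = pair_pmf (Pc i) Fd"

lemma Pc_ne: "i \<in> {1..dl} \<Longrightarrow> set_pmf P \<inter> {p. fst p = ed i} \<noteq> {}"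
proof -
  assume i: "i \<in> {1..dl}"
  have "ed i \<in> set_pmf (pmf_of_set E)" using edE[OF i] finE Ene by simp
  then have "ed i \<in> fst ` set_pmf P" unfolding margP[symmetric] set_map_pmf .
  then obtain p where "p \<in> set_pmf P" "ed i = fst p" by blast
  then have "p \<in> set_pmf P \<inter> {p. fst p = ed i}" by simp
  then show ?thesis by blast
qed

lemma set_Pc: "i \<in> {1..dl} \<Longrightarrow> set_pmf (Pc i) = set_pmf P \<inter> {p. fst p = ed i}"
  unfolding Pc_def by (rule set_cond_pmf[OF Pc_ne])

lemma finPc: "i \<in> {1..dl} \<Longrightarrow> finite (set_pmf (Pc i))"
  using finP by (simp add: set_Pc)

lemma finmc: "i \<in> {1..dl} \<Longrightarrow> finite (set_pmf (mc i))"
  unfolding mc_def using finPc finFd by simp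

lemma set_mc: "i \<in> {1..dl} \<Longrightarrow> w \<in> set_pmf (mc i) \<Longrightarrow> w \<in> set_pmf mu \<and> fst (fst w) = ed i"
proof -
  assume i: "i \<in> {1..dl}" and w: "w \<in> set_pmf (mc i)"
  then have "fst w \<in> set_pmf (Pc i)" "snd w \<in> set_pmf Fd" unfolding mc_def by (auto simp only: set_pair_pmf mem_Times_iff)
  then show ?thesis unfolding mu_pair set_Pc[OF i] by (simp add: mem_Times_iff)
qed

lemma lawPc: "T \<in> V \<Longrightarrow> i \<in> {1..dl} \<Longrightarrow> map_pmf (\<lambda>p. snd p T) (Pc i) = map_pmf (\<lambda>p. snd p T) P"
  unfolding Pc_def by (rule lawQ[OF _ edE])

lemma detW:
  assumes i: "i \<in> {1..dl}"
  shows "detm (mc i) (\<lambda>w. snd w (ed i))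
     (\<lambda>w. ((snd (fst w), Rb i (snd w)), answer E ans S w,
            (\<lambda>k. if k \<in> {i..dl} then answer E ans (nb k) w else undefined)))"
proof (rule detmI)
  fix w w' assume w: "w \<in> set_pmf (mc i)" and w': "w' \<in> set_pmf (mc i)"
    and eq: "((snd (fst w), Rb i (snd w)), answer E ans S w,
            (\<lambda>k. if k \<in> {i..dl} then answer E ans (nb k) w else undefined)) =
           ((snd (fst w'), Rb i (snd w')), answer E ans S w',
            (\<lambda>k. if k \<in> {i..dl} then answer E ans (nb k) w' else undefined))"
  have Qf: "snd (fst w) = snd (fst w')" and R: "Rb i (snd w) = Rb i (snd w')"
    and AS: "answer E ans S w = answer E ans S w'"
    and Bf: "(\<lambda>k. if k \<in> {i..dl} then answer E ans (nb k) w else undefined) =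
             (\<lambda>k. if k \<in> {i..dl} then answer E ans (nb k) w' else undefined)"
    using eq by simp_all
  have B: "answer E ans (nb k) w = answer E ans (nb k) w'" if "k \<in> {i..dl}" for k
    using fun_cong[OF Bf, of k] that by simp
  have A: "answer E ans T w = answer E ans T w'" for T
  proof (cases "T = S")
    case True then show ?thesis using AS by simp
  next
    case False
    show ?thesis
    proof (cases "T \<in> nb ` {i..dl}")
      case True
      then obtain k where "k \<in> {i..dl}" "T = nb k" by blast
      then show ?thesis using B by simp
    next
      case False2: False
      have "answer E ans T w = ans T (snd (fst w) T) (stored_files E T (Rb i (snd w)))"
        unfolding answer_def using stored_Rb[OF False False2] by simp
      also have "\<dots> = ans T (snd (fst w') T) (stored_files E T (Rb i (snd w')))" using Qf R by simp
      also have "\<dots> = answer E ans T w'"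
        unfolding answer_def using stored_Rb[OF False False2] by simp
      finally show ?thesis .
    qed
  qed
  have m: "w \<in> set_pmf mu" "fst (fst w) = ed i" using set_mc[OF i w] by auto
  have m': "w' \<in> set_pmf mu" "fst (fst w') = ed i" using set_mc[OF i w'] by auto
  have "snd w (fst (fst w)) = snd w' (fst (fst w'))"
  proof (rule detmD[OF relD m(1) m'(1)])
    show "(\<lambda>T. if T \<in> V then Some (snd (fst w) T) else None,
              \<lambda>T. if T \<in> V then Some (answer E ans T w) else None) =
          (\<lambda>T. if T \<in> V then Some (snd (fst w') T) else None,
              \<lambda>T. if T \<in> V then Some (answer E ans T w') else None)"
      by (simp only: Qf A)
  qed
  then show "snd w (ed i) = snd w' (ed i)" using m(2) m'(2) by simp
qed

end

lemma pair_marg: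
  assumes "map_pmf (\<lambda>x. (f x, g x)) M = pair_pmf A B"
  shows "map_pmf (\<lambda>x. (f x, g x)) M = pair_pmf (map_pmf f M) (map_pmf g M)"
proof -
  have "map_pmf f M = map_pmf fst (map_pmf (\<lambda>x. (f x, g x)) M)" by (simp add: map_pmf_comp)
  also have "\<dots> = A" unfolding assms map_fst_pair_pmf ..
  finally have a: "map_pmf f M = A" .
  have "map_pmf g M = map_pmf snd (map_pmf (\<lambda>x. (f x, g x)) M)" by (simp add: map_pmf_comp)
  also have "\<dots> = B" unfolding assms map_snd_pair_pmf ..
  finally have b: "map_pmf g M = B" .
  show ?thesis unfolding a b by (rule assms)
qed

context pirloc begin

lemma ans_eta: "answer E ans T = (\<lambda>w. ans T (snd (fst w) T) (stored_files E T (snd w)))"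
  by (rule ext) (simp add: answer_def)

lemma Rbup: "i \<in> {1..dl} \<Longrightarrow> Rb i (f(ed i := y)) = Rb i f"
  unfolding Rb_def by (rule ext) auto

lemma FdLaw:
  assumes i: "i \<in> {1..dl}"
  shows "map_pmf (\<lambda>F. (Rb i F, F (ed i))) Fd = pair_pmf (map_pmf (Rb i) Fd) (map_pmf (\<lambda>F. F (ed i)) Fd)"
proof (rule pair_marg)
  let ?D = "\<lambda>_::'s set. pmf_of_set Lset"
  let ?E' = "E - {ed i}"
  let ?Pi = "Pi_pmf ?E' [] ?D"
  have "Pi_pmf (insert (ed i) ?E') [] ?D = map_pmf (\<lambda>(y,f). f(ed i := y)) (pair_pmf (pmf_of_set Lset) ?Pi)"
    by (rule Pi_pmf_insert) (use finE in auto)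
  then have Fd': "Fd = map_pmf (\<lambda>(y,f). f(ed i := y)) (pair_pmf (pmf_of_set Lset) ?Pi)"
    unfolding Fd_Pi using insert_Diff[OF edE[OF i]] by simp
  have "map_pmf (\<lambda>F. (Rb i F, F (ed i))) Fd = map_pmf (\<lambda>(y,f). (Rb i f, y)) (pair_pmf (pmf_of_set Lset) ?Pi)"
    unfolding Fd' map_pmf_comp by (intro map_pmf_cong refl) (auto simp: Rbup[OF i])
  also have "\<dots> = map_pmf (\<lambda>(a, b). (b, a)) (map_pmf (\<lambda>(y,f). (id y, Rb i f)) (pair_pmf (pmf_of_set Lset) ?Pi))"
    unfolding map_pmf_comp by (rule map_pmf_cong) auto
  also have "\<dots> = map_pmf (\<lambda>(a, b). (b, a)) (pair_pmf (pmf_of_set Lset) (map_pmf (Rb i) ?Pi))"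
    unfolding map_pair by simp
  also have "\<dots> = pair_pmf (map_pmf (Rb i) ?Pi) (pmf_of_set Lset)"
    by (rule pair_commute_pmf[symmetric])
  finally show "map_pmf (\<lambda>F. (Rb i F, F (ed i))) Fd = pair_pmf (map_pmf (Rb i) ?Pi) (pmf_of_set Lset)" .
qed

lemma D1:
  assumes i: "i \<in> {1..dl}"
  shows "ent (mc i) (\<lambda>w. ((snd (fst w), Rb i (snd w)), snd w (ed i)))
       - ent (mc i) (\<lambda>w. (snd (fst w), Rb i (snd w))) = real L"
proof -
  note fin = finmc[OF i]
  have e1: "ent (mc i) (\<lambda>w. ((snd (fst w), Rb i (snd w)), snd w (ed i)))
      = ent (mc i) (\<lambda>w. (snd (fst w), (Rb i (snd w), snd w (ed i))))"
    by (rule det_ent_eq[OF fin]) (auto intro!: detmI)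
  have e2: "ent (mc i) (\<lambda>w. (snd (fst w), (Rb i (snd w), snd w (ed i))))
      = ent (mc i) (\<lambda>w. snd (fst w)) + ent (mc i) (\<lambda>w. (Rb i (snd w), snd w (ed i)))"
    by (rule indep_ent[OF fin]) (use pair_indep[of snd "\<lambda>F. (Rb i F, F (ed i))" "Pc i" Fd] in \<open>simp add: mc_def\<close>)
  have e3: "ent (mc i) (\<lambda>w. (snd (fst w), Rb i (snd w)))
      = ent (mc i) (\<lambda>w. snd (fst w)) + ent (mc i) (\<lambda>w. Rb i (snd w))"
    by (rule indep_ent[OF fin]) (use pair_indep[of snd "Rb i" "Pc i" Fd] in \<open>simp add: mc_def\<close>)
  have m1: "map_pmf (\<lambda>w. (Rb i (snd w), snd w (ed i))) (mc i) = map_pmf (\<lambda>F. (Rb i F, F (ed i))) Fd"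
    using map_snd_comp[of "\<lambda>F. (Rb i F, F (ed i))" "Pc i" Fd] by (simp add: mc_def)
  have m2: "map_pmf (\<lambda>w. Rb i (snd w)) (mc i) = map_pmf (Rb i) Fd"
    using map_snd_comp[of "Rb i" "Pc i" Fd] by (simp add: mc_def)
  have m3: "map_pmf (\<lambda>w. snd w (ed i)) (mc i) = map_pmf (\<lambda>F. F (ed i)) Fd"
    using map_snd_comp[of "\<lambda>F. F (ed i)" "Pc i" Fd] by (simp add: mc_def)
  have e4: "ent (mc i) (\<lambda>w. (Rb i (snd w), snd w (ed i)))
      = ent (mc i) (\<lambda>w. Rb i (snd w)) + ent (mc i) (\<lambda>w. snd w (ed i))"
    by (rule indep_ent[OF fin]) (simp only: m1 m2 m3 FdLaw[OF i])
  have m4: "map_pmf (\<lambda>F. F (ed i)) Fd = pmf_of_set Lset"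
    unfolding Fd_Pi using Pi_pmf_component[OF finE, of "ed i" "[]" "\<lambda>_. pmf_of_set Lset"] edE[OF i] by simp
  have e5: "ent (mc i) (\<lambda>w. snd w (ed i)) = real L"
  proof -
    have "ent (mc i) (\<lambda>w. snd w (ed i)) = log 2 (real (card Lset))"
      by (rule ent_unif[OF _ finLset Lset_ne]) (simp only: m3 m4)
    also have "\<dots> = real L" unfolding card_Lset by (simp add: log_nat_power)
    finally show ?thesis .
  qed
  show ?thesis using e1 e2 e3 e4 e5 by simp
qed

lemma transfer_mc:
  assumes i: "i \<in> {1..dl}" and T: "T \<in> V"
  shows "ent (mc i) (\<lambda>w. h (snd (fst w) T) (snd w)) = ent mu (\<lambda>w. h (snd (fst w) T) (snd w))"
  unfolding mc_def by (rule transfer[OF lawPc[OF T i]])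

lemma D35:
  assumes i: "i \<in> {1..dl}"
  shows "ent (mc i) (\<lambda>w. (((snd (fst w), Rb i (snd w)), snd w (ed i)), answer E ans S w))
     \<le> ent (mc i) (\<lambda>w. ((snd (fst w), Rb i (snd w)), answer E ans S w))
       + (\<Sum>k=i..dl. ent mu (answer E ans (nb k)))"
proof -
  note fin = finmc[OF i]
  let ?B = "\<lambda>w k. if k \<in> {i..dl} then answer E ans (nb k) w else undefined"
  have "ent (mc i) (\<lambda>w. (((snd (fst w), Rb i (snd w)), snd w (ed i)), answer E ans S w))
     \<le> ent (mc i) (\<lambda>w. (((snd (fst w), Rb i (snd w)), answer E ans S w), ?B w))"
  proof (rule det_ent_le[OF fin], rule detmI)
    fix w w' assume w: "w \<in> set_pmf (mc i)" "w' \<in> set_pmf (mc i)"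
      and eq: "(((snd (fst w), Rb i (snd w)), answer E ans S w), ?B w) = (((snd (fst w'), Rb i (snd w')), answer E ans S w'), ?B w')"
    then have eq2: "((snd (fst w), Rb i (snd w)), answer E ans S w, ?B w) = ((snd (fst w'), Rb i (snd w')), answer E ans S w', ?B w')"
      by simp
    have "snd w (ed i) = snd w' (ed i)" by (rule detmD[OF detW[OF i] w eq2])
    then show "(((snd (fst w), Rb i (snd w)), snd w (ed i)), answer E ans S w) =
               (((snd (fst w'), Rb i (snd w')), snd w' (ed i)), answer E ans S w')"
      using eq by simp
  qed
  also have "\<dots> \<le> ent (mc i) (\<lambda>w. ((snd (fst w), Rb i (snd w)), answer E ans S w)) + ent (mc i) ?B"
    by (rule subadd[OF fin])
  also have "ent (mc i) ?B \<le> (\<Sum>k\<in>{i..dl}. ent (mc i) (answer E ans (nb k)))"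
    by (rule subadd_fun[OF fin]) simp
  also have "\<dots> = (\<Sum>k=i..dl. ent mu (answer E ans (nb k)))"
  proof (rule sum.cong[OF refl])
    fix k assume k: "k \<in> {i..dl}"
    then have k1: "k \<in> {1..dl}" using i by simp
    show "ent (mc i) (answer E ans (nb k)) = ent mu (answer E ans (nb k))"
      unfolding ans_eta
      by (rule transfer_mc[OF i nbV[OF k1], of "\<lambda>q F. ans (nb k) q (stored_files E (nb k) F)"])
  qed
  finally show ?thesis by simp
qed

lemma markov_mc:
  assumes i: "i \<in> {1..dl}"
  shows "ent (mc i) (\<lambda>w. (snd (fst w), y (snd (fst w) S) (snd w))) - ent (mc i) (\<lambda>w. snd (fst w))
       = ent mu (\<lambda>w. (snd (fst w) S, y (snd (fst w) S) (snd w))) - ent mu (\<lambda>w. snd (fst w) S)"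
proof -
  have "ent (mc i) (\<lambda>w. (snd (fst w), y (snd (fst w) S) (snd w))) - ent (mc i) (\<lambda>w. snd (fst w))
      = ent (mc i) (\<lambda>w. (snd (fst w) S, y (snd (fst w) S) (snd w))) - ent (mc i) (\<lambda>w. snd (fst w) S)"
    using markov_eq_pair[OF finPc[OF i] finFd, of snd y "\<lambda>Q. Q S"] unfolding mc_def by simp
  also have "ent (mc i) (\<lambda>w. (snd (fst w) S, y (snd (fst w) S) (snd w))) = ent mu (\<lambda>w. (snd (fst w) S, y (snd (fst w) S) (snd w)))"
    by (rule transfer_mc[OF i SV, of "\<lambda>q F. (q, y q F)"])
  also have "ent (mc i) (\<lambda>w. snd (fst w) S) = ent mu (\<lambda>w. snd (fst w) S)"
    by (rule transfer_mc[OF i SV, of "\<lambda>q F. q"])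
  finally show ?thesis .
qed

end

lemma telesc: "(\<Sum>i=1..n. (f i - f (Suc i))) = f 1 - f (Suc n)" for f :: "nat \<Rightarrow> real"
  by (induction n) simp_all

context pirloc begin

definition "G i = ent mu (\<lambda>w. (snd (fst w) S, (Rb i (snd w), answer E ans S w)))
                - ent mu (\<lambda>w. (snd (fst w) S, Rb i (snd w)))"

lemma ed_notin: "i \<in> {1..dl} \<Longrightarrow> ed i \<notin> ed ` {Suc i..dl}"
proof
  assume i: "i \<in> {1..dl}" and "ed i \<in> ed ` {Suc i..dl}"
  then obtain k where k: "k \<in> {Suc i..dl}" "ed i = ed k" by blast
  then have "k \<in> {1..dl}" using i by simp
  then have "i = k" using ed_inj[OF i _ k(2)] by simp
  then show False using k(1) by simp
qed

lemma ed_img: "i \<in> {1..dl} \<Longrightarrow> ed ` {i..dl} = insert (ed i) (ed ` {Suc i..dl})"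
proof -
  assume i: "i \<in> {1..dl}"
  then have "{i..dl} = insert i {Suc i..dl}" by auto
  then show ?thesis by simp
qed

lemma Rb_iff:
  assumes i: "i \<in> {1..dl}"
  shows "(Rb (Suc i) F = Rb (Suc i) F') \<longleftrightarrow> (Rb i F = Rb i F' \<and> F (ed i) = F' (ed i))"
proof -
  have r1: "Rb i H = (Rb (Suc i) H)(ed i := [])" for H
    unfolding Rb_def ed_img[OF i] by (rule ext) auto
  have r2: "Rb (Suc i) H (ed i) = H (ed i)" for H
    unfolding Rb_def using ed_notin[OF i] by simp
  have r3: "Rb (Suc i) H = (Rb i H)(ed i := H (ed i))" for H
    unfolding Rb_def ed_img[OF i] using ed_notin[OF i] by (intro ext) auto
  show ?thesis
  proof
    assume h: "Rb (Suc i) F = Rb (Suc i) F'"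
    have "Rb i F = Rb i F'" unfolding r1[of F] r1[of F'] h ..
    moreover have "F (ed i) = F' (ed i)" using r2[of F] r2[of F'] h by simp
    ultimately show "Rb i F = Rb i F' \<and> F (ed i) = F' (ed i)" ..
  next
    assume h: "Rb i F = Rb i F' \<and> F (ed i) = F' (ed i)"
    show "Rb (Suc i) F = Rb (Suc i) F'" unfolding r3[of F] r3[of F'] using h by simp
  qed
qed

lemma G_shift:
  assumes i: "i \<in> {1..dl}"
  shows "ent mu (\<lambda>w. (snd (fst w) S, ((Rb i (snd w), snd w (ed i)), answer E ans S w)))
       - ent mu (\<lambda>w. (snd (fst w) S, (Rb i (snd w), snd w (ed i)))) = G (Suc i)"
proof -
  have a: "ent mu (\<lambda>w. (snd (fst w) S, ((Rb i (snd w), snd w (ed i)), answer E ans S w)))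
      = ent mu (\<lambda>w. (snd (fst w) S, (Rb (Suc i) (snd w), answer E ans S w)))"
    by (rule det_ent_eq[OF finmu]) (auto intro!: detmI simp: Rb_iff[OF i])
  have b: "ent mu (\<lambda>w. (snd (fst w) S, (Rb i (snd w), snd w (ed i))))
      = ent mu (\<lambda>w. (snd (fst w) S, Rb (Suc i) (snd w)))"
    by (rule det_ent_eq[OF finmu]) (auto intro!: detmI simp: Rb_iff[OF i])
  show ?thesis unfolding a b G_def ..
qed

lemma M1:
  assumes i: "i \<in> {1..dl}"
  shows "ent (mc i) (\<lambda>w. ((snd (fst w), Rb i (snd w)), answer E ans S w))
       - ent (mc i) (\<lambda>w. (snd (fst w), Rb i (snd w))) = G i"
proof -
  have a: "ent (mc i) (\<lambda>w. ((snd (fst w), Rb i (snd w)), answer E ans S w))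
      = ent (mc i) (\<lambda>w. (snd (fst w), (Rb i (snd w), answer E ans S w)))"
    by (rule det_ent_eq[OF finmc[OF i]]) (auto intro!: detmI)
  have b: "ent (mc i) (\<lambda>w. (snd (fst w), (Rb i (snd w), answer E ans S w))) - ent (mc i) (\<lambda>w. snd (fst w))
      = ent mu (\<lambda>w. (snd (fst w) S, (Rb i (snd w), answer E ans S w))) - ent mu (\<lambda>w. snd (fst w) S)"
    using markov_mc[OF i, of "\<lambda>q F. (Rb i F, ans S q (stored_files E S F))"] unfolding ans_eta by simp
  have c: "ent (mc i) (\<lambda>w. (snd (fst w), Rb i (snd w))) - ent (mc i) (\<lambda>w. snd (fst w))
      = ent mu (\<lambda>w. (snd (fst w) S, Rb i (snd w))) - ent mu (\<lambda>w. snd (fst w) S)"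
    using markov_mc[OF i, of "\<lambda>q F. Rb i F"] by simp
  show ?thesis unfolding G_def using a b c by linarith
qed

lemma M2:
  assumes i: "i \<in> {1..dl}"
  shows "ent (mc i) (\<lambda>w. (((snd (fst w), Rb i (snd w)), snd w (ed i)), answer E ans S w))
       - ent (mc i) (\<lambda>w. ((snd (fst w), Rb i (snd w)), snd w (ed i))) = G (Suc i)"
proof -
  have a: "ent (mc i) (\<lambda>w. (((snd (fst w), Rb i (snd w)), snd w (ed i)), answer E ans S w))
      = ent (mc i) (\<lambda>w. (snd (fst w), ((Rb i (snd w), snd w (ed i)), answer E ans S w)))"
    by (rule det_ent_eq[OF finmc[OF i]]) (auto intro!: detmI)
  have a2: "ent (mc i) (\<lambda>w. ((snd (fst w), Rb i (snd w)), snd w (ed i)))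
      = ent (mc i) (\<lambda>w. (snd (fst w), (Rb i (snd w), snd w (ed i))))"
    by (rule det_ent_eq[OF finmc[OF i]]) (auto intro!: detmI)
  have b: "ent (mc i) (\<lambda>w. (snd (fst w), ((Rb i (snd w), snd w (ed i)), answer E ans S w))) - ent (mc i) (\<lambda>w. snd (fst w))
      = ent mu (\<lambda>w. (snd (fst w) S, ((Rb i (snd w), snd w (ed i)), answer E ans S w))) - ent mu (\<lambda>w. snd (fst w) S)"
    using markov_mc[OF i, of "\<lambda>q F. ((Rb i F, F (ed i)), ans S q (stored_files E S F))"] unfolding ans_eta by simp
  have c: "ent (mc i) (\<lambda>w. (snd (fst w), (Rb i (snd w), snd w (ed i)))) - ent (mc i) (\<lambda>w. snd (fst w))
      = ent mu (\<lambda>w. (snd (fst w) S, (Rb i (snd w), snd w (ed i)))) - ent mu (\<lambda>w. snd (fst w) S)"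
    using markov_mc[OF i, of "\<lambda>q F. (Rb i F, F (ed i))"] by simp
  show ?thesis using a a2 b c G_shift[OF i] by linarith
qed

lemma step:
  assumes i: "i \<in> {1..dl}"
  shows "real L - (\<Sum>k=i..dl. ent mu (answer E ans (nb k))) \<le> G i - G (Suc i)"
  using D1[OF i] D35[OF i] M1[OF i] M2[OF i] by linarith

lemma step0:
  assumes i: "i \<in> {1..dl}"
  shows "0 \<le> G i - G (Suc i)"
proof -
  let ?AS = "answer E ans S"
  have "ent mu (\<lambda>w. (?AS w, snd w (ed i), (snd (fst w) S, Rb i (snd w)))) + ent mu (\<lambda>w. (snd (fst w) S, Rb i (snd w)))
     \<le> ent mu (\<lambda>w. (?AS w, (snd (fst w) S, Rb i (snd w)))) + ent mu (\<lambda>w. (snd w (ed i), (snd (fst w) S, Rb i (snd w))))"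
    by (rule submod[OF finmu])
  moreover have "ent mu (\<lambda>w. (?AS w, snd w (ed i), (snd (fst w) S, Rb i (snd w))))
      = ent mu (\<lambda>w. (snd (fst w) S, ((Rb i (snd w), snd w (ed i)), ?AS w)))"
    by (rule det_ent_eq[OF finmu]) (auto intro!: detmI)
  moreover have "ent mu (\<lambda>w. (?AS w, (snd (fst w) S, Rb i (snd w))))
      = ent mu (\<lambda>w. (snd (fst w) S, (Rb i (snd w), ?AS w)))"
    by (rule det_ent_eq[OF finmu]) (auto intro!: detmI)
  moreover have "ent mu (\<lambda>w. (snd w (ed i), (snd (fst w) S, Rb i (snd w))))
      = ent mu (\<lambda>w. (snd (fst w) S, (Rb i (snd w), snd w (ed i))))"
    by (rule det_ent_eq[OF finmu]) (auto intro!: detmI)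
  ultimately show ?thesis using G_shift[OF i] unfolding G_def by linarith
qed

lemma G_nonneg: "0 \<le> G k"
proof -
  have "ent mu (\<lambda>w. (snd (fst w) S, Rb k (snd w))) \<le> ent mu (\<lambda>w. (snd (fst w) S, (Rb k (snd w), answer E ans S w)))"
    by (rule det_ent_le[OF finmu]) (auto intro!: detmI)
  then show ?thesis unfolding G_def by simp
qed

lemma G_le: "G k \<le> ent mu (answer E ans S)"
proof -
  have "ent mu (\<lambda>w. (snd (fst w) S, (Rb k (snd w), answer E ans S w)))
      = ent mu (\<lambda>w. ((snd (fst w) S, Rb k (snd w)), answer E ans S w))"
    by (rule det_ent_eq[OF finmu]) (auto intro!: detmI)
  also have "\<dots> \<le> ent mu (\<lambda>w. (snd (fst w) S, Rb k (snd w))) + ent mu (answer E ans S)"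
    by (rule subadd[OF finmu])
  finally show ?thesis unfolding G_def by simp
qed

lemma main:
  "(\<Sum>i=1..dl. max 0 (real L - (\<Sum>j=i..dl. ent mu (answer E ans (nb j))))) \<le> ent mu (answer E ans S)"
proof -
  have "(\<Sum>i=1..dl. max 0 (real L - (\<Sum>j=i..dl. ent mu (answer E ans (nb j))))) \<le> (\<Sum>i=1..dl. (G i - G (Suc i)))"
    by (rule sum_mono) (use step step0 in auto)
  also have "\<dots> = G 1 - G (Suc dl)" by (rule telesc)
  also have "\<dots> \<le> ent mu (answer E ans S)" using G_le[of 1] G_nonneg[of "Suc dl"] by linarith
  finally show ?thesis .
qed

end

theorem theorem2:
  fixes V :: "'s set" and E :: "'s set set" and L :: nat
    and P :: "('s set \<times> ('s \<Rightarrow> 'q)) pmf"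
    and ans :: "'s \<Rightarrow> 'q \<Rightarrow> ('s set \<Rightarrow> bool list) \<Rightarrow> 'a"
    and S :: 's and nb :: "nat \<Rightarrow> 's"
  assumes "pir_scheme V E L P ans"
    and "S \<in> V"
    and "bij_betw nb {1..card (nbrs E S)} (nbrs E S)"
  shows "ent (pir_space P E L) (answer E ans S) \<ge>
    (\<Sum>i=1..card (nbrs E S). max 0 (real L -
        (\<Sum>j=i..card (nbrs E S). ent (pir_space P E L) (answer E ans (nb j)))))"
proof -
  interpret pirloc V E L P ans S nb by (unfold_locales) (rule assms)+
  show ?thesis using main unfolding mu_def dl_def by simp
qed

end
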